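(* Let $q$ be a set of operations on a set $\Omega$ and write $\sim$ for $\sim_q$. Then: (1) $\mathrm{Sim}(q)/\!\sim\;=\mathrm{Aut}(q/\!\sim)$, where $\mathrm{Sim}(q)/\!\sim\;=\{\pi/\!\sim:\pi\in\mathrm{Sim}(q)\}$; (2) a quantifier $Q$ on $\Omega$ belongs to $\mathrm{Inv}(\mathrm{Sim}(q))$ if and only if $Q/\!\sim\;\in\mathrm{Inv}(\mathrm{Aut}(q/\!\sim))$.
   Context: A similarity on $\Omega$ is a relation $\pi\subseteq\Omega\times\Omega$ such that every $a$ has some $b$ with $a\pi b$ and every $b$ has some $a$ with $a\pi b$; for relations $R,S\subseteq\Omega^k$, $R\,\pi\,S$ means that coordinatewise $\bar a\pi\bar b$ implies ($\bar a\in R\iff\bar b\in S$). A set of operations is a set of finitary relations and quantifiers (subsets of $\mathcal P(\Omega^{k_1})\times\cdots\times\mathcal P(\Omega^{k_l})$) on $\Omega$; $\mathscr L^-_{\infty\infty}(q)$ is the equality-free infinitary logic with predicate and Lindström quantifier symbols for members of $q$. $a\sim_q b$ iff for all formulas $\phi(x,\bar y)$ of $\mathscr L^-_{\infty\infty}(q)$ and tuples $\bar c$, $\phi(a,\bar c)\iff\phi(b,\bar c)$. A relation is invariant under a similarity or equivalence $\rho$ if $\bar a\rho\bar b$ implies $\bar a\in R\iff\bar b\in R$; a quantifier $Q$ is $\sim$-invariant under $\pi$ if for all $\bar R,\bar S$ of its type with each component invariant under $\sim$ and $R_i\,\pi\,S_i$: $\bar R\in Q\iff\bar S\in Q$. $\mathrm{Sim}(q)$: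 similarities under which all relations of $q$ are invariant and all quantifiers of $q$ are $\sim_q$-invariant. For a set $\Pi$ of similarities, $a\approx_\Pi b$ iff for each finite $k$ and $\bar c\in\Omega^k$ some $\pi\in\Pi$ has $(a,\bar c)\,\pi\,(b,\bar c)$; $\mathrm{Inv}(\Pi)$ is the set of relations invariant under all $\pi\in\Pi$ and quantifiers $\approx_\Pi$-invariant under all $\pi\in\Pi$. With $[a]$ the $\sim$-class of $a$: $\pi/\!\sim\;=\{([a],[b]):a\pi b\}$; for $R\subseteq\Omega^k$, $R/\!\sim\;=\{([a_1],\dots,[a_k]):(a_1,\dots,a_k)\in R\}$; for $R'\subseteq(\Omega/\!\sim)^k$, $\cup R'=\{\bar a\in\Omega^k:([a_1],\dots,[a_k])\in R'\}$; for a quantifier $Q$ on $\Omega$, $Q/\!\sim\;=\{(R'_1,\dots,R'_l):(\cup R'_1,\dots,\cup R'_l)\in Q\}$; $q/\!\sim$ is the set of $R/\!\sim$ and $Q/\!\sim$ for relations $R$ and quantifiers $Q$ in $q$. For a set $\mathcal Q$ of relations and quantifiers on a set $\Omega'$, $\mathrm{Aut}(\mathcal Q)$ is the set of permutations $f$ of $\Omega'$ with $fR=R$ for relations and $(R_1,\dots,R_l)\in Q\iff(fR_1,\dots,fR_l)\in Q$ for quantifiers in $\mathcal Q$; for a set $H$ of permutations of $\Omega'$, $\mathrm{Inv}(H)$ is the set of relations and quantifiers on $\Omega'$ preserved in this sense by all $f\in H$. *)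

theory Defs
  imports Main
begin

text \<open>Tuples are lists; a k-ary relation is a set of lists of length k.
  A quantifier of type (k1,...,kl) is a set of l-element lists of relations,
  the i-th of arity ki.\<close>

datatype 'a oper = Rel nat "'a list set" | Quant "nat list" "'a list set list set"

definition rel_on :: "'a set \<Rightarrow> nat \<Rightarrow> 'a list set \<Rightarrow> bool" where
  "rel_on A k R \<longleftrightarrow> (\<forall>xs\<in>R. length xs = k \<and> set xs \<subseteq> A)"

definition args_on :: "'a set \<Rightarrow> nat list \<Rightarrow> 'a list set list \<Rightarrow> bool" where
  "args_on A ks Rs \<longleftrightarrow> length Rs = length ks \<and> (\<forall>i<length ks. rel_on A (ks ! i) (Rs ! i))"

fun wf_oper :: "'a set \<Rightarrow> 'a oper \<Rightarrow> bool" where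
  "wf_oper A (Rel k R) = rel_on A k R"
| "wf_oper A (Quant ks Q) = (\<forall>Rs\<in>Q. args_on A ks Rs)"

definition similarity :: "('a \<times> 'a) set \<Rightarrow> bool" where
  "similarity \<pi> \<longleftrightarrow> (\<forall>a. \<exists>b. (a, b) \<in> \<pi>) \<and> (\<forall>b. \<exists>a. (a, b) \<in> \<pi>)"

definition rel_sim :: "('a \<times> 'a) set \<Rightarrow> 'a list set \<Rightarrow> 'a list set \<Rightarrow> bool" where
  "rel_sim \<pi> R S \<longleftrightarrow>
     (\<forall>as bs. list_all2 (\<lambda>a b. (a, b) \<in> \<pi>) as bs \<longrightarrow> (as \<in> R \<longleftrightarrow> bs \<in> S))"

text \<open>Q is E-invariant under pi (E an equivalence, e.g. sim_q or approx_Pi).\<close>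
definition quant_inv :: "('a \<times> 'a) set \<Rightarrow> ('a \<times> 'a) set \<Rightarrow> nat list \<Rightarrow> 'a list set list set \<Rightarrow> bool" where
  "quant_inv E \<pi> ks Q \<longleftrightarrow>
     (\<forall>Rs Ss. args_on UNIV ks Rs \<longrightarrow> args_on UNIV ks Ss \<longrightarrow>
        (\<forall>R\<in>set Rs. rel_sim E R R) \<longrightarrow> (\<forall>S\<in>set Ss. rel_sim E S S) \<longrightarrow>
        list_all2 (rel_sim \<pi>) Rs Ss \<longrightarrow> (Rs \<in> Q \<longleftrightarrow> Ss \<in> Q))"

text \<open>Variables have type 'v, assignments are functions 'v => 'a. A formula is
  identified with the set of assignments satisfying it; defin q A says that A is
  the extension of some formula of the logic.\<close>

definition upds :: "('v \<Rightarrow> 'a) \<Rightarrow> 'v list \<Rightarrow> 'a list \<Rightarrow> ('v \<Rightarrow> 'a)" where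
  "upds s vs as = fold (\<lambda>(v, a) f. f(v := a)) (zip vs as) s"

inductive defin :: "'a oper set \<Rightarrow> ('v \<Rightarrow> 'a) set \<Rightarrow> bool" for q where
  atom: "Rel k R \<in> q \<Longrightarrow> length vs = k \<Longrightarrow> defin q {s. map s vs \<in> R}"
| neg: "defin q A \<Longrightarrow> defin q (- A)"
| conj: "(\<And>A. A \<in> F \<Longrightarrow> defin q A) \<Longrightarrow> defin q (\<Inter> F)"
| ex: "defin q A \<Longrightarrow> defin q {s. \<exists>t\<in>A. \<forall>v. v \<notin> W \<longrightarrow> t v = s v}"
| quant: "Quant ks Q \<in> q \<Longrightarrow> length vss = length ks \<Longrightarrow> length As = length ks \<Longrightarrow>
     (\<forall>i<length ks. length (vss ! i) = ks ! i \<and> distinct (vss ! i) \<and> defin q (As ! i)) \<Longrightarrow>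
     defin q {s. map (\<lambda>i. {as. length as = ks ! i \<and> upds s (vss ! i) as \<in> As ! i}) [0..<length ks] \<in> Q}"

definition fin_supp :: "('v \<Rightarrow> 'a) set \<Rightarrow> bool" where
  "fin_supp A \<longleftrightarrow> (\<exists>V. finite V \<and> (\<forall>s t. (\<forall>v\<in>V. s v = t v) \<longrightarrow> (s \<in> A \<longleftrightarrow> t \<in> A)))"

text \<open>a sim_q b: for all formulas phi(x, ybar) (finitely many free variables)
  and all parameters, phi(a, cbar) iff phi(b, cbar).\<close>
definition simeq :: "'v itself \<Rightarrow> 'a oper set \<Rightarrow> ('a \<times> 'a) set" where
  "simeq V q = {(a, b). \<forall>(A :: ('v \<Rightarrow> 'a) set) x s. defin q A \<longrightarrow> fin_supp A \<longrightarrow>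
        (s(x := a) \<in> A \<longleftrightarrow> s(x := b) \<in> A)}"

definition Sim :: "'v itself \<Rightarrow> 'a oper set \<Rightarrow> ('a \<times> 'a) set set" where
  "Sim V q = {\<pi>. similarity \<pi> \<and>
     (\<forall>k R. Rel k R \<in> q \<longrightarrow> rel_sim \<pi> R R) \<and>
     (\<forall>ks Q. Quant ks Q \<in> q \<longrightarrow> quant_inv (simeq V q) \<pi> ks Q)}"

definition approx :: "('a \<times> 'a) set set \<Rightarrow> ('a \<times> 'a) set" where
  "approx \<Pi> = {(a, b). \<forall>cs. \<exists>\<pi>\<in>\<Pi>. list_all2 (\<lambda>x y. (x, y) \<in> \<pi>) (a # cs) (b # cs)}"

definition Inv :: "('a \<times> 'a) set set \<Rightarrow> 'a oper set" where
  "Inv \<Pi> = {op. wf_oper UNIV op \<and>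
     (case op of Rel k R \<Rightarrow> (\<forall>\<pi>\<in>\<Pi>. rel_sim \<pi> R R)
               | Quant ks Q \<Rightarrow> (\<forall>\<pi>\<in>\<Pi>. quant_inv (approx \<Pi>) \<pi> ks Q))}"

definition cls :: "'v itself \<Rightarrow> 'a oper set \<Rightarrow> 'a \<Rightarrow> 'a set" where
  "cls V q a = simeq V q `` {a}"

definition qcarrier :: "'v itself \<Rightarrow> 'a oper set \<Rightarrow> 'a set set" where
  "qcarrier V q = UNIV // simeq V q"

definition quot_sim :: "'v itself \<Rightarrow> 'a oper set \<Rightarrow> ('a \<times> 'a) set \<Rightarrow> ('a set \<times> 'a set) set" where
  "quot_sim V q \<pi> = {(cls V q a, cls V q b) | a b. (a, b) \<in> \<pi>}"

definition quot_rel :: "'v itself \<Rightarrow> 'a oper set \<Rightarrow> 'a list set \<Rightarrow> 'a set list set" where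
  "quot_rel V q R = map (cls V q) ` R"

definition cup :: "'v itself \<Rightarrow> 'a oper set \<Rightarrow> 'a set list set \<Rightarrow> 'a list set" where
  "cup V q R' = {as. map (cls V q) as \<in> R'}"

definition quot_quant :: "'v itself \<Rightarrow> 'a oper set \<Rightarrow> nat list \<Rightarrow> 'a list set list set \<Rightarrow> 'a set list set list set" where
  "quot_quant V q ks Q = {Rs'. args_on (qcarrier V q) ks Rs' \<and> map (cup V q) Rs' \<in> Q}"

fun quot_oper :: "'v itself \<Rightarrow> 'a oper set \<Rightarrow> 'a oper \<Rightarrow> 'a set oper" where
  "quot_oper V q (Rel k R) = Rel k (quot_rel V q R)"
| "quot_oper V q (Quant ks Q) = Quant ks (quot_quant V q ks Q)"

definition quot_ops :: "'v itself \<Rightarrow> 'a oper set \<Rightarrow> 'a set oper set" where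
  "quot_ops V q = quot_oper V q ` q"

fun preserves :: "'b set \<Rightarrow> ('b \<Rightarrow> 'b) \<Rightarrow> 'b oper \<Rightarrow> bool" where
  "preserves A f (Rel k R) = (map f ` R = R)"
| "preserves A f (Quant ks Q) =
     (\<forall>Rs. args_on A ks Rs \<longrightarrow> (Rs \<in> Q \<longleftrightarrow> map (\<lambda>R. map f ` R) Rs \<in> Q))"

definition Aut :: "'b set \<Rightarrow> 'b oper set \<Rightarrow> ('b \<Rightarrow> 'b) set" where
  "Aut A ops = {f. bij_betw f A A \<and> (\<forall>op\<in>ops. preserves A f op)}"

definition InvA :: "'b set \<Rightarrow> ('b \<Rightarrow> 'b) set \<Rightarrow> 'b oper set" where
  "InvA A H = {op. wf_oper A op \<and> (\<forall>f\<in>H. preserves A f op)}"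

definition graph_on :: "'b set \<Rightarrow> ('b \<Rightarrow> 'b) \<Rightarrow> ('b \<times> 'b) set" where
  "graph_on A f = {(x, f x) | x. x \<in> A}"

end

theory Submission imports Defs begin

lemma upds_Cons: "upds s (v#vs) (a#as) = upds (s(v:=a)) vs as"
  by (simp add: upds_def)

lemma upds_Nil1[simp]: "upds s [] as = s" by (simp add: upds_def)
lemma upds_Nil2[simp]: "upds s vs [] = s" by (simp add: upds_def)

lemma upds_notin: "v \<notin> set vs \<Longrightarrow> upds s vs as v = s v"
proof (induction vs arbitrary: s as)
  case (Cons w vs) then show ?case by (cases as) (auto simp: upds_Cons)
qed simp

lemma upds_map: "distinct vs \<Longrightarrow> length as = length vs \<Longrightarrow> map (upds s vs as) vs = as"
proof (induction vs arbitrary: s as)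
  case (Cons w vs) then show ?case by (cases as) (auto simp: upds_Cons upds_notin)
qed simp

lemma upds_pw: "(\<forall>v. P (s v) (t v)) \<Longrightarrow> list_all2 P as bs \<Longrightarrow> \<forall>v. P (upds s vs as v) (upds t vs bs v)"
proof (induction vs arbitrary: s t as bs)
  case (Cons w vs)
  show ?case
  proof (cases as)
    case Nil then show ?thesis using Cons by simp
  next
    case (Cons a as')
    then obtain b bs' where "bs = b # bs'" using Cons.prems(2) by (cases bs) auto
    moreover have "list_all2 P as' bs'" "P a b" using Cons.prems(2) \<open>as = a # as'\<close> calculation by auto
    moreover have "\<forall>v. P ((s(w:=a)) v) ((t(w:=b)) v)" using Cons.prems(1) \<open>P a b\<close> by simp
    ultimately have "\<forall>v. P (upds (s(w:=a)) vs as' v) (upds (t(w:=b)) vs bs' v)"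
      by (intro Cons.IH) auto
    then show ?thesis unfolding \<open>as = a # as'\<close> \<open>bs = b # bs'\<close> upds_Cons .
  qed
qed simp

lemma upds_diff: "{v. upds s vs as v \<noteq> upds t vs bs v} \<subseteq> {v. s v \<noteq> t v} \<union> set vs"
proof
  fix x assume "x \<in> {v. upds s vs as v \<noteq> upds t vs bs v}"
  then show "x \<in> {v. s v \<noteq> t v} \<union> set vs"
    using upds_notin[of x vs s as] upds_notin[of x vs t bs] by (cases "x \<in> set vs") auto
qed

lemma simeq_refl: "(a, a) \<in> simeq V q" by (simp add: simeq_def)
lemma simeq_sym: "(a, b) \<in> simeq V q \<Longrightarrow> (b, a) \<in> simeq V q" by (simp add: simeq_def)
lemma simeq_trans: "(a, b) \<in> simeq V q \<Longrightarrow> (b, c) \<in> simeq V q \<Longrightarrow> (a, c) \<in> simeq V q"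
  unfolding simeq_def by blast

lemma chain:
  assumes single: "\<And>s x a b. (a, b) \<in> E \<Longrightarrow> (s(x:=a) \<in> A \<longleftrightarrow> s(x:=b) \<in> A)"
  and "finite F" and Erefl: "\<And>a. (a,a) \<in> E"
  shows "{v. s v \<noteq> t v} \<subseteq> F \<Longrightarrow> \<forall>v. (s v, t v) \<in> E \<Longrightarrow> (s \<in> A \<longleftrightarrow> t \<in> A)"
  using assms(2)
proof (induction F arbitrary: s)
  case empty
  then have "s = t" by auto
  then show ?case by simp
next
  case (insert x F)
  define s' where "s' = s(x := t x)"
  have "{v. s' v \<noteq> t v} \<subseteq> F" using insert.prems(1) by (auto simp: s'_def)
  moreover have "\<forall>v. (s' v, t v) \<in> E" using insert.prems(2) Erefl by (auto simp: s'_def)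
  ultimately have "s' \<in> A \<longleftrightarrow> t \<in> A" using insert.IH by blast
  moreover have "s(x := s x) \<in> A \<longleftrightarrow> s(x := t x) \<in> A" using single insert.prems(2) by blast
  ultimately show ?case by (simp add: s'_def)
qed

lemma atom_fin_supp: "fin_supp {s. map s vs \<in> R}"
proof -
  have "\<forall>s t. (\<forall>v\<in>set vs. s v = t v) \<longrightarrow> (s \<in> {s. map s vs \<in> R} \<longleftrightarrow> t \<in> {s. map s vs \<in> R})"
    by (metis (mono_tags, lifting) map_eq_conv mem_Collect_eq)
  then show ?thesis unfolding fin_supp_def by blast
qed

lemma L1:
  fixes V :: "'v itself" and A :: "('v \<Rightarrow> 'a) set"
  assumes "defin q A"
  shows "finite {v. s v \<noteq> t v} \<Longrightarrow> \<forall>v. (s v, t v) \<in> simeq V q \<Longrightarrow> (s \<in> A \<longleftrightarrow> t \<in> A)"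
  using assms
proof (induction arbitrary: s t rule: defin.induct)
  case (atom k R vs)
  have d: "defin q {s :: 'v \<Rightarrow> 'a. map s vs \<in> R}" by (rule defin.atom[OF atom.hyps])
  have "\<And>s x a b. (a, b) \<in> simeq V q \<Longrightarrow> (s(x:=a) \<in> {s :: 'v \<Rightarrow> 'a. map s vs \<in> R} \<longleftrightarrow> s(x:=b) \<in> {s. map s vs \<in> R})"
    using d atom_fin_supp unfolding simeq_def by blast
  from chain[OF this atom.prems(1) simeq_refl _ atom.prems(2)] show ?case by blast
next
  case (neg A) then show ?case by blast
next
  case (conj F) then show ?case by blast
next
  case (ex A W)
  have dir: "s0 \<in> {s. \<exists>t\<in>A. \<forall>v. v \<notin> W \<longrightarrow> t v = s v} \<Longrightarrow> t0 \<in> {s. \<exists>t\<in>A. \<forall>v. v \<notin> W \<longrightarrow> t v = s v}"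
    if f: "finite {v. s0 v \<noteq> t0 v}" and p: "\<forall>v. (s0 v, t0 v) \<in> simeq V q" for s0 t0
  proof -
    assume "s0 \<in> {s. \<exists>t\<in>A. \<forall>v. v \<notin> W \<longrightarrow> t v = s v}"
    then obtain u where u: "u \<in> A" "\<forall>v. v \<notin> W \<longrightarrow> u v = s0 v" by blast
    define u' where "u' v = (if v \<in> W then u v else t0 v)" for v
    have "{v. u v \<noteq> u' v} \<subseteq> {v. s0 v \<noteq> t0 v}" using u by (auto simp: u'_def)
    then have "finite {v. u v \<noteq> u' v}" using f finite_subset by blast
    moreover have "\<forall>v. (u v, u' v) \<in> simeq V q" using u p by (auto simp: u'_def simeq_refl)
    ultimately have "u' \<in> A" using ex.IH u by blast
    then show ?thesis by (intro CollectI bexI[of _ u']) (auto simp: u'_def)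
  qed
  have "{v. t v \<noteq> s v} = {v. s v \<noteq> t v}" by auto
  then have f2: "finite {v. t v \<noteq> s v}" using ex.prems(1) by simp
  have p2: "\<forall>v. (t v, s v) \<in> simeq V q"
  proof
    fix v show "(t v, s v) \<in> simeq V q" using simeq_sym[of "s v" "t v" V q] ex.prems(2) by blast
  qed
  show ?case using dir[of s t, OF ex.prems] dir[of t s, OF f2 p2] by blast
next
  case (quant ks Q vss As)
  have "(\<lambda>i. {as. length as = ks ! i \<and> upds s (vss ! i) as \<in> As ! i}) i =
        (\<lambda>i. {as. length as = ks ! i \<and> upds t (vss ! i) as \<in> As ! i}) i" if i: "i < length ks" for i
  proof -
    have "upds s (vss ! i) as \<in> As ! i \<longleftrightarrow> upds t (vss ! i) as \<in> As ! i" for as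
    proof -
      have "finite {v. upds s (vss ! i) as v \<noteq> upds t (vss ! i) as v}"
        using upds_diff[of s "vss!i" as t as] quant.prems(1) finite_subset by blast
      moreover have "\<forall>v. (upds s (vss ! i) as v, upds t (vss ! i) as v) \<in> simeq V q"
        using upds_pw[of "\<lambda>a b. (a,b) \<in> simeq V q", OF quant.prems(2)]
        by (simp add: list.rel_refl simeq_refl)
      ultimately show ?thesis using quant.IH i by blast
    qed
    then show ?thesis by simp
  qed
  then have "map (\<lambda>i. {as. length as = ks ! i \<and> upds s (vss ! i) as \<in> As ! i}) [0..<length ks] =
        map (\<lambda>i. {as. length as = ks ! i \<and> upds t (vss ! i) as \<in> As ! i}) [0..<length ks]"
    by (intro map_cong) auto
  then show ?case by (simp only: mem_Collect_eq)
qed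


lemma inv_R:
  fixes V :: "'v itself" and A :: "('v \<Rightarrow> 'a) set"
  assumes "defin q A"
  shows "rel_sim (simeq V q) {as. length as = k \<and> upds s vs as \<in> A} {as. length as = k \<and> upds s vs as \<in> A}"
  unfolding rel_sim_def
proof (intro allI impI)
  fix as bs assume r: "list_all2 (\<lambda>a b. (a, b) \<in> simeq V q) as bs"
  have "finite {v. upds s vs as v \<noteq> upds s vs bs v}"
    using upds_diff[of s vs as s bs] finite_subset by auto
  moreover have "\<forall>v. (upds s vs as v, upds s vs bs v) \<in> simeq V q"
    using upds_pw[of "\<lambda>a b. (a,b) \<in> simeq V q" s s as bs vs] r by (simp add: simeq_refl)
  ultimately have "upds s vs as \<in> A \<longleftrightarrow> upds s vs bs \<in> A" using L1[OF assms] by blast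
  moreover have "length as = length bs" using r list_all2_lengthD by blast
  ultimately show "as \<in> {as. length as = k \<and> upds s vs as \<in> A} \<longleftrightarrow> bs \<in> {as. length as = k \<and> upds s vs as \<in> A}"
    by simp
qed

lemma L2:
  fixes V :: "'v itself" and A :: "('v \<Rightarrow> 'a) set"
  assumes pi: "\<pi> \<in> Sim V q" and "defin q A"
  shows "\<forall>v. (s v, t v) \<in> \<pi> \<Longrightarrow> (s \<in> A \<longleftrightarrow> t \<in> A)"
  using assms(2)
proof (induction arbitrary: s t rule: defin.induct)
  case (atom k R vs)
  have "rel_sim \<pi> R R" using pi atom.hyps(1) by (auto simp: Sim_def)
  moreover have "list_all2 (\<lambda>a b. (a, b) \<in> \<pi>) (map s vs) (map t vs)"
    using atom.prems by (simp add: list_all2_conv_all_nth)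
  ultimately show ?case by (simp add: rel_sim_def)
next
  case (neg A) then show ?case by blast
next
  case (conj F) then show ?case by blast
next
  case (ex A W)
  have sim: "similarity \<pi>" using pi by (simp add: Sim_def)
  show ?case
  proof
    assume "s \<in> {s. \<exists>t\<in>A. \<forall>v. v \<notin> W \<longrightarrow> t v = s v}"
    then obtain u where u: "u \<in> A" "\<forall>v. v \<notin> W \<longrightarrow> u v = s v" by blast
    define u' where "u' v = (if v \<in> W then (SOME b. (u v, b) \<in> \<pi>) else t v)" for v
    have "\<forall>v. (u v, u' v) \<in> \<pi>"
    proof
      fix v show "(u v, u' v) \<in> \<pi>"
      proof (cases "v \<in> W")
        case True
        have "\<exists>b. (u v, b) \<in> \<pi>" using sim by (simp add: similarity_def)
        then have "(u v, SOME b. (u v, b) \<in> \<pi>) \<in> \<pi>" by (rule someI_ex)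
        then show ?thesis using True by (simp add: u'_def)
      next
        case False then show ?thesis using u ex.prems by (simp add: u'_def)
      qed
    qed
    then have "u' \<in> A" using ex.IH u by blast
    then show "t \<in> {s. \<exists>t\<in>A. \<forall>v. v \<notin> W \<longrightarrow> t v = s v}"
      by (intro CollectI bexI[of _ u']) (auto simp: u'_def)
  next
    assume "t \<in> {s. \<exists>t\<in>A. \<forall>v. v \<notin> W \<longrightarrow> t v = s v}"
    then obtain u where u: "u \<in> A" "\<forall>v. v \<notin> W \<longrightarrow> u v = t v" by blast
    define u' where "u' v = (if v \<in> W then (SOME a. (a, u v) \<in> \<pi>) else s v)" for v
    have "\<forall>v. (u' v, u v) \<in> \<pi>"
    proof
      fix v show "(u' v, u v) \<in> \<pi>"
      proof (cases "v \<in> W")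
        case True
        have "\<exists>a. (a, u v) \<in> \<pi>" using sim by (simp add: similarity_def)
        then have "(SOME a. (a, u v) \<in> \<pi>, u v) \<in> \<pi>" by (rule someI_ex)
        then show ?thesis using True by (simp add: u'_def)
      next
        case False then show ?thesis using u ex.prems by (simp add: u'_def)
      qed
    qed
    then have "u' \<in> A" using ex.IH u by blast
    then show "s \<in> {s. \<exists>t\<in>A. \<forall>v. v \<notin> W \<longrightarrow> t v = s v}"
      by (intro CollectI bexI[of _ u']) (auto simp: u'_def)
  qed
next
  case (quant ks Q vss As)
  define Rs where "Rs = map (\<lambda>i. {as. length as = ks ! i \<and> upds s (vss ! i) as \<in> As ! i}) [0..<length ks]"
  define Ss where "Ss = map (\<lambda>i. {as. length as = ks ! i \<and> upds t (vss ! i) as \<in> As ! i}) [0..<length ks]"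
  have qi: "quant_inv (simeq V q) \<pi> ks Q" using pi quant.hyps(1) by (auto simp: Sim_def)
  have a1: "args_on UNIV ks Rs" "args_on UNIV ks Ss"
    by (auto simp: args_on_def rel_on_def Rs_def Ss_def)
  have i1: "\<forall>R\<in>set Rs. rel_sim (simeq V q) R R" "\<forall>S\<in>set Ss. rel_sim (simeq V q) S S"
    using quant.IH by (auto simp: Rs_def Ss_def intro!: inv_R)
  have "rel_sim \<pi> (Rs ! i) (Ss ! i)" if i: "i < length ks" for i
    unfolding rel_sim_def
  proof (intro allI impI)
    fix as bs assume r: "list_all2 (\<lambda>a b. (a, b) \<in> \<pi>) as bs"
    have "\<forall>v. (upds s (vss ! i) as v, upds t (vss ! i) bs v) \<in> \<pi>"
      using upds_pw[of "\<lambda>a b. (a,b) \<in> \<pi>", OF _ r] quant.prems by blast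
    then have "upds s (vss ! i) as \<in> As ! i \<longleftrightarrow> upds t (vss ! i) bs \<in> As ! i"
      using quant.IH i by blast
    moreover have "length as = length bs" using r list_all2_lengthD by blast
    ultimately show "as \<in> Rs ! i \<longleftrightarrow> bs \<in> Ss ! i" using i by (simp add: Rs_def Ss_def)
  qed
  then have "list_all2 (rel_sim \<pi>) Rs Ss"
    by (simp add: list_all2_conv_all_nth Rs_def Ss_def)
  then have "Rs \<in> Q \<longleftrightarrow> Ss \<in> Q" using qi a1 i1 unfolding quant_inv_def by blast
  then show ?case by (simp add: Rs_def Ss_def)
qed


lemma rel_simeq:
  fixes V :: "'v itself"
  assumes inf: "infinite (UNIV :: 'v set)" and R: "Rel k R \<in> q" and wf: "wf_oper UNIV (Rel k R)"
  shows "rel_sim (simeq V q) R R"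
  unfolding rel_sim_def
proof (intro allI impI)
  fix as bs assume r: "list_all2 (\<lambda>a b. (a, b) \<in> simeq V q) as bs"
  have len: "length as = length bs" using r list_all2_lengthD by blast
  show "as \<in> R \<longleftrightarrow> bs \<in> R"
  proof (cases "length as = k")
    case False
    then show ?thesis using wf len by (auto simp: rel_on_def)
  next
    case True
    obtain F :: "'v set" where F: "finite F" "card F = k" using infinite_arbitrarily_large[OF inf] by blast
    obtain vs where vs: "set vs = F" "distinct vs" using finite_distinct_list[OF F(1)] by blast
    have lvs: "length vs = k" using vs F distinct_card by fastforce
    define s :: "'v \<Rightarrow> 'a" where "s = (\<lambda>_. undefined)"
    have d: "defin q {s :: 'v \<Rightarrow> 'a. map s vs \<in> R}" by (rule defin.atom[OF R lvs])
    have "finite {v. upds s vs as v \<noteq> upds s vs bs v}"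
      using upds_diff[of s vs as s bs] finite_subset by auto
    moreover have "\<forall>v. (upds s vs as v, upds s vs bs v) \<in> simeq V q"
      using upds_pw[of "\<lambda>a b. (a,b) \<in> simeq V q" s s as bs vs] r by (simp add: simeq_refl)
    ultimately have "upds s vs as \<in> {s :: 'v \<Rightarrow> 'a. map s vs \<in> R} \<longleftrightarrow> upds s vs bs \<in> {s. map s vs \<in> R}"
      using L1[OF d] by blast
    moreover have "map (upds s vs as) vs = as" "map (upds s vs bs) vs = bs"
      using upds_map[OF vs(2)] True len lvs by auto
    ultimately show ?thesis by simp
  qed
qed

lemma simeq_Sim:
  fixes V :: "'v itself"
  assumes inf: "infinite (UNIV :: 'v set)" and wf: "\<forall>op\<in>q. wf_oper UNIV op"
  shows "simeq V q \<in> Sim V q"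
proof -
  have "similarity (simeq V q)" by (auto simp: similarity_def intro: simeq_refl)
  moreover have "\<forall>k R. Rel k R \<in> q \<longrightarrow> rel_sim (simeq V q) R R"
    using rel_simeq[OF inf] wf by blast
  moreover have "quant_inv (simeq V q) (simeq V q) ks Q" for ks Q
    unfolding quant_inv_def
  proof (intro allI impI)
    fix Rs Ss :: "'a list set list"
    assume "list_all2 (rel_sim (simeq V q)) Rs Ss"
    then have "Rs = Ss"
    proof (induction rule: list_all2_induct)
      case (Cons R Rs S Ss)
      have "R = S"
      proof (rule set_eqI)
        fix as
        have "list_all2 (\<lambda>a b. (a, b) \<in> simeq V q) as as" by (simp add: list.rel_refl simeq_refl)
        then show "as \<in> R \<longleftrightarrow> as \<in> S" using Cons.hyps(1) by (simp add: rel_sim_def)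
      qed
      then show ?case using Cons by simp
    qed simp
    then show "Rs \<in> Q \<longleftrightarrow> Ss \<in> Q" by simp
  qed
  ultimately show ?thesis by (simp add: Sim_def)
qed

lemma approx_Sim:
  fixes V :: "'v itself"
  assumes inf: "infinite (UNIV :: 'v set)" and wf: "\<forall>op\<in>q. wf_oper UNIV op"
  shows "approx (Sim V q) = simeq V q"
proof (intro set_eqI iffI)
  fix p assume "p \<in> simeq V q"
  then obtain a b where p: "p = (a, b)" "(a, b) \<in> simeq V q" by (cases p) auto
  have "list_all2 (\<lambda>x y. (x, y) \<in> simeq V q) (a # cs) (b # cs)" for cs
    using p by (simp add: list.rel_refl simeq_refl)
  then show "p \<in> approx (Sim V q)" using simeq_Sim[OF inf wf] p by (auto simp: approx_def)
next
  fix p assume "p \<in> approx (Sim V q)"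
  then obtain a b where p: "p = (a, b)" "(a, b) \<in> approx (Sim V q)" by (cases p) auto
  have "(s(x := a) \<in> A) = (s(x := b) \<in> A)" if A: "defin q A" "fin_supp A" for A :: "('v \<Rightarrow> 'a) set" and x s
  proof -
    obtain W0 where W0: "finite W0" "\<forall>s t. (\<forall>v\<in>W0. s v = t v) \<longrightarrow> (s \<in> A \<longleftrightarrow> t \<in> A)"
      using A(2) by (auto simp: fin_supp_def)
    obtain cs where cs: "set cs = s ` W0" using finite_list[of "s ` W0"] W0(1) by blast
    obtain \<pi> where pi: "\<pi> \<in> Sim V q" "list_all2 (\<lambda>x y. (x, y) \<in> \<pi>) (a # cs) (b # cs)"
      using p(2) by (auto simp: approx_def)
    have ab: "(a, b) \<in> \<pi>" using pi(2) by simp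
    have cc: "(c, c) \<in> \<pi>" if "c \<in> set cs" for c
      using pi(2) that by (auto simp: list_all2_conv_all_nth in_set_conv_nth)
    have "similarity \<pi>" using pi(1) by (simp add: Sim_def)
    then obtain c0 d0 where c0: "(c0, d0) \<in> \<pi>" unfolding similarity_def by blast
    define s1 where "s1 v = (if v = x then a else if v \<in> W0 then s v else c0)" for v
    define s2 where "s2 v = (if v = x then b else if v \<in> W0 then s v else d0)" for v
    have "\<forall>v. (s1 v, s2 v) \<in> \<pi>" using ab cc cs c0 by (auto simp: s1_def s2_def)
    then have "s1 \<in> A \<longleftrightarrow> s2 \<in> A" using L2[OF pi(1) A(1)] by blast
    moreover have "s1 \<in> A \<longleftrightarrow> s(x := a) \<in> A" using W0(2) by (auto simp: s1_def)
    moreover have "s2 \<in> A \<longleftrightarrow> s(x := b) \<in> A" using W0(2) by (auto simp: s2_def)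
    ultimately show ?thesis by simp
  qed
  then show "p \<in> simeq V q" using p by (auto simp: simeq_def)
qed

lemma W1:
  fixes V :: "'v itself"
  assumes pi: "\<pi> \<in> Sim V q" and "(a, b) \<in> \<pi>" "(a', b') \<in> \<pi>" "(a, a') \<in> simeq V q"
  shows "(b, b') \<in> simeq V q"
proof -
  have sim: "similarity \<pi>" using pi by (simp add: Sim_def)
  have "(s(x := b) \<in> A) = (s(x := b') \<in> A)" if A: "defin q A" "fin_supp A" for A :: "('v \<Rightarrow> 'a) set" and x s
  proof -
    define s' where "s' v = (SOME u. (u, s v) \<in> \<pi>)" for v
    have s': "(s' v, s v) \<in> \<pi>" for v
    proof -
      have "\<exists>u. (u, s v) \<in> \<pi>" using sim by (simp add: similarity_def)
      then show ?thesis unfolding s'_def by (rule someI_ex)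
    qed
    have "\<forall>v. ((s'(x:=a)) v, (s(x:=b)) v) \<in> \<pi>" using s' assms by simp
    then have 1: "s'(x:=a) \<in> A \<longleftrightarrow> s(x:=b) \<in> A" using L2[OF pi A(1)] by blast
    have "\<forall>v. ((s'(x:=a')) v, (s(x:=b')) v) \<in> \<pi>" using s' assms by simp
    then have 2: "s'(x:=a') \<in> A \<longleftrightarrow> s(x:=b') \<in> A" using L2[OF pi A(1)] by blast
    have "s'(x:=a) \<in> A \<longleftrightarrow> s'(x:=a') \<in> A" using assms(4) A by (auto simp: simeq_def)
    then show ?thesis using 1 2 by simp
  qed
  then show ?thesis by (auto simp: simeq_def)
qed

lemma W2:
  fixes V :: "'v itself"
  assumes pi: "\<pi> \<in> Sim V q" and "(a, b) \<in> \<pi>" "(a', b') \<in> \<pi>" "(b, b') \<in> simeq V q"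
  shows "(a, a') \<in> simeq V q"
proof -
  have sim: "similarity \<pi>" using pi by (simp add: Sim_def)
  have "(s(x := a) \<in> A) = (s(x := a') \<in> A)" if A: "defin q A" "fin_supp A" for A :: "('v \<Rightarrow> 'a) set" and x s
  proof -
    define s' where "s' v = (SOME u. (s v, u) \<in> \<pi>)" for v
    have s': "(s v, s' v) \<in> \<pi>" for v
    proof -
      have "\<exists>u. (s v, u) \<in> \<pi>" using sim by (simp add: similarity_def)
      then show ?thesis unfolding s'_def by (rule someI_ex)
    qed
    have "\<forall>v. ((s(x:=a)) v, (s'(x:=b)) v) \<in> \<pi>" using s' assms by simp
    then have 1: "s(x:=a) \<in> A \<longleftrightarrow> s'(x:=b) \<in> A" using L2[OF pi A(1)] by blast
    have "\<forall>v. ((s(x:=a')) v, (s'(x:=b')) v) \<in> \<pi>" using s' assms by simp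
    then have 2: "s(x:=a') \<in> A \<longleftrightarrow> s'(x:=b') \<in> A" using L2[OF pi A(1)] by blast
    have "s'(x:=b) \<in> A \<longleftrightarrow> s'(x:=b') \<in> A" using assms(4) A by (auto simp: simeq_def)
    then show ?thesis using 1 2 by simp
  qed
  then show ?thesis by (auto simp: simeq_def)
qed


lemma cls_eq: "cls V q a = cls V q b \<longleftrightarrow> (a, b) \<in> simeq V q"
proof
  assume "cls V q a = cls V q b"
  moreover have "b \<in> cls V q b" by (simp add: cls_def simeq_refl)
  ultimately have "b \<in> cls V q a" by simp
  then show "(a, b) \<in> simeq V q" by (simp add: cls_def)
next
  assume "(a, b) \<in> simeq V q"
  then show "cls V q a = cls V q b"
    unfolding cls_def by (auto intro: simeq_trans simeq_sym)
qed

lemma cls_mem: "(a, a') \<in> simeq V q \<longleftrightarrow> a' \<in> cls V q a" by (simp add: cls_def)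

lemma qcarrier_eq: "qcarrier V q = range (cls V q)"
  by (auto simp: qcarrier_def quotient_def cls_def)

lemma cls_in[simp]: "cls V q a \<in> qcarrier V q" by (simp add: qcarrier_eq)

lemma map_cls_eq: "map (cls V q) as = map (cls V q) bs \<longleftrightarrow> list_all2 (\<lambda>a b. (a, b) \<in> simeq V q) as bs"
proof
  show "map (cls V q) as = map (cls V q) bs \<Longrightarrow> list_all2 (\<lambda>a b. (a, b) \<in> simeq V q) as bs"
  proof (induction as arbitrary: bs)
    case Nil then show ?case by simp
  next
    case (Cons a as)
    then obtain b bs' where "bs = b # bs'" by (cases bs) auto
    then show ?case using Cons by (simp add: cls_eq)
  qed
next
  show "list_all2 (\<lambda>a b. (a, b) \<in> simeq V q) as bs \<Longrightarrow> map (cls V q) as = map (cls V q) bs"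
    by (induction rule: list_all2_induct) (simp_all add: cls_eq)
qed

lemma sim_list1: "similarity \<pi> \<Longrightarrow> \<exists>bs. list_all2 (\<lambda>a b. (a, b) \<in> \<pi>) as bs"
proof (induction as)
  case (Cons a as)
  then obtain bs where "list_all2 (\<lambda>a b. (a, b) \<in> \<pi>) as bs" by blast
  moreover obtain b where "(a, b) \<in> \<pi>" using Cons.prems unfolding similarity_def by blast
  ultimately show ?case by blast
next
  case Nil show ?case by (rule exI[of _ "[]"]) simp
qed

lemma sim_list2: "similarity \<pi> \<Longrightarrow> \<exists>as. list_all2 (\<lambda>a b. (a, b) \<in> \<pi>) as bs"
proof (induction bs)
  case (Cons b bs)
  then obtain as where "list_all2 (\<lambda>a b. (a, b) \<in> \<pi>) as bs" by blast
  moreover obtain a where "(a, b) \<in> \<pi>" using Cons.prems unfolding similarity_def by blast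
  ultimately show ?case by blast
next
  case Nil show ?case by (rule exI[of _ "[]"]) simp
qed

lemma map_H:
  assumes H: "\<forall>a b. (a, b) \<in> \<pi> \<longrightarrow> f (cls V q a) = cls V q b"
  shows "list_all2 (\<lambda>a b. (a, b) \<in> \<pi>) as bs \<Longrightarrow> map f (map (cls V q) as) = map (cls V q) bs"
  by (induction rule: list_all2_induct) (auto simp: H)

lemma G:
  assumes H: "\<forall>a b. (a, b) \<in> \<pi> \<longrightarrow> f (cls V q a) = cls V q b"
    and sim: "similarity \<pi>" and r: "rel_sim \<pi> R S"
  shows "map f ` (map (cls V q) ` R) = map (cls V q) ` S"
proof (intro set_eqI iffI)
  fix x assume "x \<in> map f ` (map (cls V q) ` R)"
  then obtain as where as: "as \<in> R" "x = map f (map (cls V q) as)" by blast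
  obtain bs where bs: "list_all2 (\<lambda>a b. (a, b) \<in> \<pi>) as bs" using sim_list1[OF sim] by blast
  then have "bs \<in> S" using r as by (simp add: rel_sim_def)
  moreover have "x = map (cls V q) bs" using map_H[OF H bs] as by simp
  ultimately show "x \<in> map (cls V q) ` S" by blast
next
  fix x assume "x \<in> map (cls V q) ` S"
  then obtain bs where bs: "bs \<in> S" "x = map (cls V q) bs" by blast
  obtain as where as: "list_all2 (\<lambda>a b. (a, b) \<in> \<pi>) as bs" using sim_list2[OF sim] by blast
  then have "as \<in> R" using r bs by (simp add: rel_sim_def)
  moreover have "x = map f (map (cls V q) as)" using map_H[OF H as] bs by simp
  ultimately show "x \<in> map f ` (map (cls V q) ` R)" by blast
qed

lemma cup_quot:
  assumes "rel_sim (simeq V q) R R"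
  shows "cup V q (map (cls V q) ` R) = R"
proof (intro set_eqI iffI)
  fix xs assume "xs \<in> cup V q (map (cls V q) ` R)"
  then obtain ys where "ys \<in> R" "map (cls V q) xs = map (cls V q) ys" by (auto simp: cup_def)
  then show "xs \<in> R" using assms by (auto simp: rel_sim_def map_cls_eq)
next
  fix xs assume "xs \<in> R" then show "xs \<in> cup V q (map (cls V q) ` R)" by (auto simp: cup_def)
qed

lemma cup_rel_on: "rel_on A k R' \<Longrightarrow> rel_on UNIV k (cup V q R')"
  by (auto simp: rel_on_def cup_def)

lemma cup_inv: "rel_sim (simeq V q) (cup V q R') (cup V q R')"
  by (auto simp: rel_sim_def cup_def map_cls_eq[symmetric])

lemma cup_rel:
  assumes H: "\<forall>a b. (a, b) \<in> \<pi> \<longrightarrow> f (cls V q a) = cls V q b"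
    and inj: "inj_on f (qcarrier V q)" and R': "\<forall>xs\<in>R'. set xs \<subseteq> qcarrier V q"
  shows "rel_sim \<pi> (cup V q R') (cup V q (map f ` R'))"
  unfolding rel_sim_def
proof (intro allI impI)
  fix as bs assume r: "list_all2 (\<lambda>a b. (a, b) \<in> \<pi>) as bs"
  have m: "map f (map (cls V q) as) = map (cls V q) bs" using map_H[OF H r] .
  have "map (cls V q) as \<in> R' \<longleftrightarrow> map f (map (cls V q) as) \<in> map f ` R'"
  proof
    assume "map f (map (cls V q) as) \<in> map f ` R'"
    then obtain ys where ys: "ys \<in> R'" "map f (map (cls V q) as) = map f ys" by auto
    have "inj_on f (set (map (cls V q) as) \<union> set ys)"
      using R' ys(1) by (intro inj_on_subset[OF inj]) auto
    then have "map (cls V q) as = ys" using map_inj_on[OF ys(2)] by blast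
    then show "map (cls V q) as \<in> R'" using ys by simp
  next
    assume "map (cls V q) as \<in> R'"
    then show "map f (map (cls V q) as) \<in> map f ` R'" by (rule imageI)
  qed
  then show "as \<in> cup V q R' \<longleftrightarrow> bs \<in> cup V q (map f ` R')"
    using m by (simp add: cup_def)
qed


lemma AQ:
  assumes H: "\<forall>a b. (a, b) \<in> \<pi> \<longrightarrow> f (cls V q a) = cls V q b"
    and inj: "inj_on f (qcarrier V q)" and img: "f ` qcarrier V q \<subseteq> qcarrier V q"
    and qi: "quant_inv (simeq V q) \<pi> ks Q"
  shows "preserves (qcarrier V q) f (Quant ks (quot_quant V q ks Q))"
proof (simp only: preserves.simps, intro allI impI)
  fix Rs assume a: "args_on (qcarrier V q) ks Rs"
  define Ts where "Ts = map (\<lambda>R. map f ` R) Rs"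
  have aT: "args_on (qcarrier V q) ks Ts"
    using a img unfolding args_on_def rel_on_def Ts_def by (auto, blast)
  have "\<And>i. i < length ks \<Longrightarrow> \<forall>xs\<in>Rs ! i. set xs \<subseteq> qcarrier V q"
    using a by (auto simp: args_on_def rel_on_def)
  then have lr: "list_all2 (rel_sim \<pi>) (map (cup V q) Rs) (map (cup V q) Ts)"
    using a cup_rel[OF H inj] by (auto simp: list_all2_conv_all_nth Ts_def args_on_def)
  have a1: "args_on UNIV ks (map (cup V q) Rs)" "args_on UNIV ks (map (cup V q) Ts)"
    using a aT by (auto simp: args_on_def intro!: cup_rel_on[of "qcarrier V q"])
  have "map (cup V q) Rs \<in> Q \<longleftrightarrow> map (cup V q) Ts \<in> Q"
  proof -
    have "\<forall>R\<in>set (map (cup V q) Rs). rel_sim (simeq V q) R R"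
         "\<forall>R\<in>set (map (cup V q) Ts). rel_sim (simeq V q) R R" using cup_inv by auto
    then show ?thesis using qi a1 lr unfolding quant_inv_def by blast
  qed
  then show "Rs \<in> quot_quant V q ks Q \<longleftrightarrow> map (\<lambda>R. map f ` R) Rs \<in> quot_quant V q ks Q"
    using a aT by (simp add: quot_quant_def Ts_def)
qed

lemma QA:
  assumes H: "\<forall>a b. (a, b) \<in> \<pi> \<longrightarrow> f (cls V q a) = cls V q b"
    and sim: "similarity \<pi>"
    and pr: "preserves (qcarrier V q) f (Quant ks (quot_quant V q ks Q))"
  shows "quant_inv (simeq V q) \<pi> ks Q"
  unfolding quant_inv_def
proof (intro allI impI)
  fix Rs Ss
  assume aR: "args_on UNIV ks Rs" and aS: "args_on UNIV ks Ss"
    and iR: "\<forall>R\<in>set Rs. rel_sim (simeq V q) R R" and iS: "\<forall>S\<in>set Ss. rel_sim (simeq V q) S S"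
    and lr: "list_all2 (rel_sim \<pi>) Rs Ss"
  define Rs' where "Rs' = map (\<lambda>R. map (cls V q) ` R) Rs"
  define Ss' where "Ss' = map (\<lambda>R. map (cls V q) ` R) Ss"
  have aR': "args_on (qcarrier V q) ks Rs'" using aR by (auto simp: args_on_def rel_on_def Rs'_def)
  have aS': "args_on (qcarrier V q) ks Ss'" using aS by (auto simp: args_on_def rel_on_def Ss'_def)
  have e1: "map (\<lambda>R. map f ` R) Rs' = Ss'"
  proof (rule nth_equalityI)
    show "length (map (\<lambda>R. map f ` R) Rs') = length Ss'"
      using lr by (simp add: Rs'_def Ss'_def list_all2_lengthD)
  next
    fix i assume "i < length (map (\<lambda>R. map f ` R) Rs')"
    then have i: "i < length Rs" "i < length Ss" using lr by (auto simp: Rs'_def list_all2_lengthD)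
    have "rel_sim \<pi> (Rs ! i) (Ss ! i)" using lr i by (simp add: list_all2_conv_all_nth)
    then show "map (\<lambda>R. map f ` R) Rs' ! i = Ss' ! i"
      using G[OF H sim] i by (simp add: Rs'_def Ss'_def)
  qed
  have e2: "map (cup V q) Rs' = Rs" unfolding Rs'_def map_map
    by (rule map_idI) (simp add: cup_quot iR)
  have e3: "map (cup V q) Ss' = Ss" unfolding Ss'_def map_map
    by (rule map_idI) (simp add: cup_quot iS)
  have "Rs' \<in> quot_quant V q ks Q \<longleftrightarrow> map (\<lambda>R. map f ` R) Rs' \<in> quot_quant V q ks Q"
    using pr aR' by (simp only: preserves.simps)
  then have "Rs' \<in> quot_quant V q ks Q \<longleftrightarrow> Ss' \<in> quot_quant V q ks Q" using e1 by simp
  then show "Rs \<in> Q \<longleftrightarrow> Ss \<in> Q"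
    using aR' aS' e2 e3 unfolding quot_quant_def by simp
qed

lemma RA:
  assumes H: "\<forall>a b. (a, b) \<in> \<pi> \<longrightarrow> f (cls V q a) = cls V q b"
    and inj: "inj_on f (qcarrier V q)"
    and pr: "map f ` quot_rel V q R = quot_rel V q R"
    and inv: "rel_sim (simeq V q) R R"
  shows "rel_sim \<pi> R R"
  unfolding rel_sim_def
proof (intro allI impI)
  fix as bs assume r: "list_all2 (\<lambda>a b. (a, b) \<in> \<pi>) as bs"
  have m: "map f (map (cls V q) as) = map (cls V q) bs" using map_H[OF H r] .
  show "as \<in> R \<longleftrightarrow> bs \<in> R"
  proof
    assume "as \<in> R"
    then have "map (cls V q) as \<in> quot_rel V q R" by (simp add: quot_rel_def)
    then have "map f (map (cls V q) as) \<in> map f ` quot_rel V q R" by (rule imageI)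
    then have "map (cls V q) bs \<in> map f ` quot_rel V q R" using m by simp
    then have "map (cls V q) bs \<in> quot_rel V q R" using pr by simp
    then obtain cs where "cs \<in> R" "map (cls V q) bs = map (cls V q) cs" by (auto simp: quot_rel_def)
    then show "bs \<in> R" using inv by (auto simp: rel_sim_def map_cls_eq)
  next
    assume "bs \<in> R"
    then have "map (cls V q) bs \<in> map f ` quot_rel V q R" using pr by (auto simp: quot_rel_def)
    then obtain cs where cs: "cs \<in> R" "map (cls V q) bs = map f (map (cls V q) cs)" by (auto simp: quot_rel_def)
    have "inj_on f (set (map (cls V q) as) \<union> set (map (cls V q) cs))"
      by (intro inj_on_subset[OF inj]) auto
    then have "map (cls V q) as = map (cls V q) cs" using map_inj_on m cs(2) by metis
    then show "as \<in> R" using inv cs(1) by (auto simp: rel_sim_def map_cls_eq)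
  qed
qed


lemma SimAut:
  fixes V :: "'v itself"
  assumes pi: "\<pi> \<in> Sim V q"
  shows "\<exists>f. f \<in> Aut (qcarrier V q) (quot_ops V q) \<and> (\<forall>a b. (a, b) \<in> \<pi> \<longrightarrow> f (cls V q a) = cls V q b)
            \<and> quot_sim V q \<pi> = graph_on (qcarrier V q) f"
proof -
  have sim: "similarity \<pi>" using pi by (simp add: Sim_def)
  define f where "f X = cls V q (SOME b. \<exists>a\<in>X. (a, b) \<in> \<pi>)" for X
  have H: "\<forall>a b. (a, b) \<in> \<pi> \<longrightarrow> f (cls V q a) = cls V q b"
  proof (intro allI impI)
    fix a b assume ab: "(a, b) \<in> \<pi>"
    have "\<exists>b. \<exists>a'\<in>cls V q a. (a', b) \<in> \<pi>" using ab
      by (intro exI[of _ b] bexI[of _ a]) (auto simp: cls_def simeq_refl)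
    then have "\<exists>a'\<in>cls V q a. (a', SOME b. \<exists>a'\<in>cls V q a. (a', b) \<in> \<pi>) \<in> \<pi>" by (rule someI_ex)
    then obtain a' where a': "a' \<in> cls V q a" "(a', SOME b. \<exists>a'\<in>cls V q a. (a', b) \<in> \<pi>) \<in> \<pi>" by blast
    have "(a, a') \<in> simeq V q" using a'(1) by (simp add: cls_def)
    then have "(b, SOME b. \<exists>a'\<in>cls V q a. (a', b) \<in> \<pi>) \<in> simeq V q" using W1[OF pi ab a'(2)] by blast
    then have "(SOME b. \<exists>a'\<in>cls V q a. (a', b) \<in> \<pi>, b) \<in> simeq V q" by (rule simeq_sym)
    then show "f (cls V q a) = cls V q b" unfolding f_def by (simp only: cls_eq)
  qed
  have img: "f ` qcarrier V q = qcarrier V q"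
  proof
    show "f ` qcarrier V q \<subseteq> qcarrier V q" by (auto simp: f_def)
    show "qcarrier V q \<subseteq> f ` qcarrier V q"
    proof
      fix Y assume "Y \<in> qcarrier V q"
      then obtain b where b: "Y = cls V q b" by (auto simp: qcarrier_eq)
      obtain a where "(a, b) \<in> \<pi>" using sim unfolding similarity_def by blast
      then have "f (cls V q a) = Y" using H b by blast
      then show "Y \<in> f ` qcarrier V q" by (metis cls_in imageI)
    qed
  qed
  have inj: "inj_on f (qcarrier V q)"
  proof (rule inj_onI)
    fix X Y assume X: "X \<in> qcarrier V q" and Y: "Y \<in> qcarrier V q" and e: "f X = f Y"
    obtain a a' where aa: "X = cls V q a" "Y = cls V q a'" using X Y by (auto simp: qcarrier_eq)
    obtain b where b: "(a, b) \<in> \<pi>" using sim unfolding similarity_def by blast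
    obtain b' where b': "(a', b') \<in> \<pi>" using sim unfolding similarity_def by blast
    have "cls V q b = cls V q b'" using e H aa b b' by metis
    then have "(b, b') \<in> simeq V q" by (simp add: cls_eq)
    then have "(a, a') \<in> simeq V q" using W2[OF pi b b'] by blast
    then show "X = Y" using aa by (simp add: cls_eq)
  qed
  have pres: "preserves (qcarrier V q) f op" if op_in: "op \<in> quot_ops V q" for op
  proof -
    obtain oo where o: "oo \<in> q" "op = quot_oper V q oo" using op_in unfolding quot_ops_def by blast
    show ?thesis
    proof (cases oo)
      case (Rel k R)
      have "rel_sim \<pi> R R" using pi o Rel by (auto simp: Sim_def)
      then have "map f ` quot_rel V q R = quot_rel V q R" using G[OF H sim] by (simp add: quot_rel_def)
      then show ?thesis using o Rel by simp
    next
      case (Quant ks Q)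
      have "quant_inv (simeq V q) \<pi> ks Q" using pi o Quant by (auto simp: Sim_def)
      then show ?thesis using AQ[OF H inj] img o Quant by simp
    qed
  qed
  have gr: "quot_sim V q \<pi> = graph_on (qcarrier V q) f"
  proof (intro set_eqI iffI)
    fix p assume "p \<in> quot_sim V q \<pi>"
    then obtain a b where "p = (cls V q a, cls V q b)" "(a, b) \<in> \<pi>" by (auto simp: quot_sim_def)
    then show "p \<in> graph_on (qcarrier V q) f" using H by (auto simp: graph_on_def)
  next
    fix p assume "p \<in> graph_on (qcarrier V q) f"
    then obtain X where X: "X \<in> qcarrier V q" "p = (X, f X)" by (auto simp: graph_on_def)
    then obtain a where a: "X = cls V q a" by (auto simp: qcarrier_eq)
    obtain b where b: "(a, b) \<in> \<pi>" using sim unfolding similarity_def by blast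
    then show "p \<in> quot_sim V q \<pi>" using H X a by (auto simp: quot_sim_def)
  qed
  have "f \<in> Aut (qcarrier V q) (quot_ops V q)"
    using inj img pres by (auto simp: Aut_def bij_betw_def)
  then show ?thesis using H gr by blast
qed

lemma AutSim:
  fixes V :: "'v itself"
  assumes inf: "infinite (UNIV :: 'v set)" and wf: "\<forall>op\<in>q. wf_oper UNIV op"
    and f: "f \<in> Aut (qcarrier V q) (quot_ops V q)"
  shows "{(a, b). f (cls V q a) = cls V q b} \<in> Sim V q
         \<and> quot_sim V q {(a, b). f (cls V q a) = cls V q b} = graph_on (qcarrier V q) f"
proof -
  define \<pi> where "\<pi> = {(a, b). f (cls V q a) = cls V q b}"
  have H: "\<forall>a b. (a, b) \<in> \<pi> \<longrightarrow> f (cls V q a) = cls V q b" by (simp add: \<pi>_def)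
  have bij: "bij_betw f (qcarrier V q) (qcarrier V q)" using f by (simp add: Aut_def)
  then have inj: "inj_on f (qcarrier V q)" and img: "f ` qcarrier V q = qcarrier V q"
    by (auto simp: bij_betw_def)
  have pr: "preserves (qcarrier V q) f (quot_oper V q oo)" if "oo \<in> q" for oo
  proof -
    have "quot_oper V q oo \<in> quot_ops V q" by (simp add: quot_ops_def that)
    then show ?thesis using f unfolding Aut_def by blast
  qed
  have tot: "\<exists>b. (a, b) \<in> \<pi>" for a
  proof -
    have "f (cls V q a) \<in> qcarrier V q" using img by auto
    then show ?thesis by (auto simp: qcarrier_eq \<pi>_def)
  qed
  have sur: "\<exists>a. (a, b) \<in> \<pi>" for b
  proof -
    have "cls V q b \<in> f ` qcarrier V q" using img by simp
    then show ?thesis by (auto simp: qcarrier_eq \<pi>_def)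
  qed
  have sim: "similarity \<pi>" using tot sur by (simp add: similarity_def)
  have "\<forall>k R. Rel k R \<in> q \<longrightarrow> rel_sim \<pi> R R"
  proof (intro allI impI)
    fix k R assume R: "Rel k R \<in> q"
    have "map f ` quot_rel V q R = quot_rel V q R" using pr[OF R] by simp
    moreover have "rel_sim (simeq V q) R R" using rel_simeq[OF inf R] wf R by blast
    ultimately show "rel_sim \<pi> R R" using RA[OF H inj] by blast
  qed
  moreover have "\<forall>ks Q. Quant ks Q \<in> q \<longrightarrow> quant_inv (simeq V q) \<pi> ks Q"
  proof (intro allI impI)
    fix ks Q assume Q: "Quant ks Q \<in> q"
    show "quant_inv (simeq V q) \<pi> ks Q" using QA[OF H sim] pr[OF Q] by simp
  qed
  ultimately have "\<pi> \<in> Sim V q" using sim by (simp add: Sim_def)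
  moreover have "quot_sim V q \<pi> = graph_on (qcarrier V q) f"
  proof (intro set_eqI iffI)
    fix p assume "p \<in> quot_sim V q \<pi>"
    then obtain a b where "p = (cls V q a, cls V q b)" "(a, b) \<in> \<pi>" by (auto simp: quot_sim_def)
    then show "p \<in> graph_on (qcarrier V q) f" using H by (auto simp: graph_on_def)
  next
    fix p assume "p \<in> graph_on (qcarrier V q) f"
    then obtain X where X: "X \<in> qcarrier V q" "p = (X, f X)" by (auto simp: graph_on_def)
    then obtain a where a: "X = cls V q a" by (auto simp: qcarrier_eq)
    obtain b where b: "(a, b) \<in> \<pi>" using tot by blast
    then show "p \<in> quot_sim V q \<pi>" using H X a by (auto simp: quot_sim_def)
  qed
  ultimately show ?thesis by (simp add: \<pi>_def)
qed

theorem proposition17: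
  fixes q :: "'a oper set"
  assumes "infinite (UNIV :: 'v set)"
    and "\<forall>op\<in>q. wf_oper UNIV op"
  shows "quot_sim TYPE('v) q ` Sim TYPE('v) q
           = graph_on (qcarrier TYPE('v) q) ` Aut (qcarrier TYPE('v) q) (quot_ops TYPE('v) q)
         \<and> (\<forall>ks Q. wf_oper UNIV (Quant ks Q) \<longrightarrow>
           (Quant ks Q \<in> Inv (Sim TYPE('v) q) \<longleftrightarrow>
            Quant ks (quot_quant TYPE('v) q ks Q)
              \<in> InvA (qcarrier TYPE('v) q) (Aut (qcarrier TYPE('v) q) (quot_ops TYPE('v) q))))"
proof (intro conjI allI impI)
  show "quot_sim TYPE('v) q ` Sim TYPE('v) q
           = graph_on (qcarrier TYPE('v) q) ` Aut (qcarrier TYPE('v) q) (quot_ops TYPE('v) q)"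
  proof
    show "quot_sim TYPE('v) q ` Sim TYPE('v) q
           \<subseteq> graph_on (qcarrier TYPE('v) q) ` Aut (qcarrier TYPE('v) q) (quot_ops TYPE('v) q)"
    proof
      fix g assume "g \<in> quot_sim TYPE('v) q ` Sim TYPE('v) q"
      then obtain \<pi> where pi: "\<pi> \<in> Sim TYPE('v) q" "g = quot_sim TYPE('v) q \<pi>" by blast
      obtain f where f: "f \<in> Aut (qcarrier TYPE('v) q) (quot_ops TYPE('v) q)"
        "quot_sim TYPE('v) q \<pi> = graph_on (qcarrier TYPE('v) q) f"
        using SimAut[OF pi(1)] by blast
      show "g \<in> graph_on (qcarrier TYPE('v) q) ` Aut (qcarrier TYPE('v) q) (quot_ops TYPE('v) q)"
        using f pi(2) by (intro image_eqI[of _ _ f]) auto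
    qed
    show "graph_on (qcarrier TYPE('v) q) ` Aut (qcarrier TYPE('v) q) (quot_ops TYPE('v) q)
           \<subseteq> quot_sim TYPE('v) q ` Sim TYPE('v) q"
    proof
      fix g assume "g \<in> graph_on (qcarrier TYPE('v) q) ` Aut (qcarrier TYPE('v) q) (quot_ops TYPE('v) q)"
      then obtain f where f: "f \<in> Aut (qcarrier TYPE('v) q) (quot_ops TYPE('v) q)"
        "g = graph_on (qcarrier TYPE('v) q) f" by blast
      from AutSim[OF assms f(1)] f(2) show "g \<in> quot_sim TYPE('v) q ` Sim TYPE('v) q"
        by (intro image_eqI[of _ _ "{(a, b). f (cls TYPE('v) q a) = cls TYPE('v) q b}"]) auto
    qed
  qed
next
  fix ks Q assume wfQ: "wf_oper UNIV (Quant ks (Q :: 'a list set list set))"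
  have ap: "approx (Sim TYPE('v) q) = simeq TYPE('v) q" using approx_Sim[OF assms] .
  have wfq: "wf_oper (qcarrier TYPE('v) q) (Quant ks (quot_quant TYPE('v) q ks Q))"
    by (simp add: quot_quant_def)
  show "Quant ks Q \<in> Inv (Sim TYPE('v) q) \<longleftrightarrow>
            Quant ks (quot_quant TYPE('v) q ks Q)
              \<in> InvA (qcarrier TYPE('v) q) (Aut (qcarrier TYPE('v) q) (quot_ops TYPE('v) q))"
  proof
    assume "Quant ks Q \<in> Inv (Sim TYPE('v) q)"
    then have qi: "\<forall>\<pi>\<in>Sim TYPE('v) q. quant_inv (simeq TYPE('v) q) \<pi> ks Q"
      using ap by (simp add: Inv_def)
    have "preserves (qcarrier TYPE('v) q) f (Quant ks (quot_quant TYPE('v) q ks Q))"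
      if f: "f \<in> Aut (qcarrier TYPE('v) q) (quot_ops TYPE('v) q)" for f
    proof -
      define \<pi> where "\<pi> = {(a, b). f (cls TYPE('v) q a) = cls TYPE('v) q b}"
      have "\<pi> \<in> Sim TYPE('v) q" using AutSim[OF assms f] by (simp add: \<pi>_def)
      then have "quant_inv (simeq TYPE('v) q) \<pi> ks Q" using qi by blast
      moreover have "bij_betw f (qcarrier TYPE('v) q) (qcarrier TYPE('v) q)" using f by (simp add: Aut_def)
      moreover have "\<forall>a b. (a, b) \<in> \<pi> \<longrightarrow> f (cls TYPE('v) q a) = cls TYPE('v) q b" by (simp add: \<pi>_def)
      ultimately show ?thesis using AQ[of \<pi> f "TYPE('v)" q ks Q] by (simp add: bij_betw_def)
    qed
    then show "Quant ks (quot_quant TYPE('v) q ks Q)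
              \<in> InvA (qcarrier TYPE('v) q) (Aut (qcarrier TYPE('v) q) (quot_ops TYPE('v) q))"
      using wfq by (simp add: InvA_def)
  next
    assume a: "Quant ks (quot_quant TYPE('v) q ks Q)
              \<in> InvA (qcarrier TYPE('v) q) (Aut (qcarrier TYPE('v) q) (quot_ops TYPE('v) q))"
    have "quant_inv (simeq TYPE('v) q) \<pi> ks Q" if pi: "\<pi> \<in> Sim TYPE('v) q" for \<pi>
    proof -
      obtain f where f: "f \<in> Aut (qcarrier TYPE('v) q) (quot_ops TYPE('v) q)"
        "\<forall>a b. (a, b) \<in> \<pi> \<longrightarrow> f (cls TYPE('v) q a) = cls TYPE('v) q b"
        using SimAut[OF pi] by blast
      have "preserves (qcarrier TYPE('v) q) f (Quant ks (quot_quant TYPE('v) q ks Q))"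
        using a f(1) by (simp add: InvA_def)
      moreover have "similarity \<pi>" using pi by (simp add: Sim_def)
      ultimately show ?thesis using QA[OF f(2)] by blast
    qed
    then show "Quant ks Q \<in> Inv (Sim TYPE('v) q)" using wfQ ap by (simp add: Inv_def)
  qed
qed

end
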